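(* Let $\mathcal{R}:=\mathbb{C}[s_1,\dots,s_k,z]/(P^2)$, where $P=P_s(z)$. For each integer $p\in[0,k-1]$ the following equality holds in $\mathcal{R}^k=\mathbb{C}^k\otimes_{\mathbb{C}}\mathcal{R}$: $$z^pE(z)=A(s)^pE(z)+(-1)^{k-1}P_s(z)\frac{\partial(A(s)^p)}{\partial s_k}E(z).$$ In particular, for any entire function $f$ of $z$, $\Phi_{zf}=A(s)\Phi_f$. Moreover, the following identity holds in $\mathcal{R}^k$: $$P'_s(z)E(z)=P'_s(A(s))E(z)+(-1)^{k-1}P_s(z)\frac{\partial(P'_s(A(s)))}{\partial s_k}E(z).$$
   Context: Fix an integer $k\ge 2$. Use coordinates $s=(s_1,\dots,s_k)$, set $s_0:=1$, $P_s(z):=\sum_{h=0}^k(-1)^hs_hz^{k-h}$ and $P'_s(z):=\partial_zP_s(z)=\sum_{h=0}^{k-1}(-1)^h(k-h)s_hz^{k-h-1}$. Let $E(z):=(1,z,\dots,z^{k-1})^T$. $A(s)$ is the $(k,k)$ companion matrix with $A_{i,i+1}=1$ for $i\in[1,k-1]$, last row $A_{k,j}=(-1)^{k-j}s_{k+1-j}$ for $j\in[1,k]$, all other entries $0$; $P'_s(A(s)):=\sum_{h=0}^{k-1}(-1)^h(k-h)s_hA(s)^{k-h-1}$. For an entire $f$, $\Phi_f(s):=\frac{1}{2i\pi}\int_{|\zeta|=R}\frac{f(\zeta)E(\zeta)\,d\zeta}{P_s(\zeta)}$ with $R$ large enough that all roots of $P_s$ lie in $\{|\zeta|<R\}$.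 *)

theory Defs
  imports "HOL-Complex_Analysis.Complex_Analysis" "Jordan_Normal_Form.Matrix"
begin

text \<open>Coordinates s = (s_1,...,s_k) are represented by s :: nat => complex; only s 1 .. s k
  matter and s_0 is always taken to be 1 (the value s 0 is ignored).\<close>

definition sc :: "(nat \<Rightarrow> complex) \<Rightarrow> nat \<Rightarrow> complex" where
  "sc s h = (if h = 0 then 1 else s h)"

definition Ps :: "nat \<Rightarrow> (nat \<Rightarrow> complex) \<Rightarrow> complex \<Rightarrow> complex" where
  "Ps k s z = (\<Sum>h=0..k. (-1)^h * sc s h * z^(k-h))"

definition dPs :: "nat \<Rightarrow> (nat \<Rightarrow> complex) \<Rightarrow> complex \<Rightarrow> complex" where
  "dPs k s z = (\<Sum>h=0..k-1. (-1)^h * of_nat (k-h) * sc s h * z^(k-h-1))"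

definition Evec :: "nat \<Rightarrow> complex \<Rightarrow> complex vec" where
  "Evec k z = vec k (\<lambda>i. z^i)"

text \<open>Companion matrix, 0-based indices: entry (i,i+1) = 1 for i < k-1; last row
  (i = k-1): entry (k-1,j) = (-1)^(k-1-j) s_(k-j) (the paper's A_{k,j'} = (-1)^(k-j') s_(k+1-j')
  with j' = j+1).\<close>
definition Acomp :: "nat \<Rightarrow> (nat \<Rightarrow> complex) \<Rightarrow> complex mat" where
  "Acomp k s = mat k k (\<lambda>(i,j).
      if i + 1 = k then (-1)^(k-1-j) * s (k - j)
      else if j = i + 1 then 1 else 0)"

definition dPsA :: "nat \<Rightarrow> (nat \<Rightarrow> complex) \<Rightarrow> complex mat" where
  "dPsA k s = foldr (\<lambda>h M. ((-1)^h * of_nat (k-h) * sc s h) \<cdot>\<^sub>m (Acomp k s ^\<^sub>m (k-h-1)) + M)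
      [0..<k] (0\<^sub>m k k)"

definition dsk_mat :: "nat \<Rightarrow> ((nat \<Rightarrow> complex) \<Rightarrow> complex mat) \<Rightarrow> (nat \<Rightarrow> complex) \<Rightarrow> complex mat" where
  "dsk_mat k F s = mat k k (\<lambda>(i,j). deriv (\<lambda>t. F (s(k := t)) $$ (i,j)) (s k))"

text \<open>Polynomial functions in the variables s_1,...,s_k and z (with complex coefficients).
  Since C is infinite, these correspond exactly to elements of C[s_1,...,s_k,z].\<close>
inductive polyfun :: "nat \<Rightarrow> ((nat \<Rightarrow> complex) \<Rightarrow> complex \<Rightarrow> complex) \<Rightarrow> bool" for k where
  pf_const: "polyfun k (\<lambda>s z. c)"
| pf_z: "polyfun k (\<lambda>s z. z)"
| pf_s: "1 \<le> i \<Longrightarrow> i \<le> k \<Longrightarrow> polyfun k (\<lambda>s z. s i)"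
| pf_add: "polyfun k f \<Longrightarrow> polyfun k g \<Longrightarrow> polyfun k (\<lambda>s z. f s z + g s z)"
| pf_mult: "polyfun k f \<Longrightarrow> polyfun k g \<Longrightarrow> polyfun k (\<lambda>s z. f s z * g s z)"

text \<open>Equality in R^k = (C[s_1..s_k,z]/(P^2))^k of two vector-valued polynomial maps:
  the difference is P_s(z)^2 times a vector of polynomials.\<close>
definition eq_mod_P2 :: "nat \<Rightarrow> ((nat \<Rightarrow> complex) \<Rightarrow> complex \<Rightarrow> complex vec)
    \<Rightarrow> ((nat \<Rightarrow> complex) \<Rightarrow> complex \<Rightarrow> complex vec) \<Rightarrow> bool" where
  "eq_mod_P2 k U V \<longleftrightarrow> (\<exists>g :: (nat \<Rightarrow> complex) \<Rightarrow> complex \<Rightarrow> nat \<Rightarrow> complex.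
      (\<forall>i<k. polyfun k (\<lambda>s z. g s z i)) \<and>
      (\<forall>s z. U s z - V s z = (Ps k s z ^ 2) \<cdot>\<^sub>v vec k (g s z)))"

definition Phi :: "nat \<Rightarrow> (complex \<Rightarrow> complex) \<Rightarrow> (nat \<Rightarrow> complex) \<Rightarrow> real \<Rightarrow> complex vec" where
  "Phi k f s R = vec k (\<lambda>i. contour_integral (circlepath 0 R)
      (\<lambda>\<zeta>. f \<zeta> * \<zeta>^i / Ps k s \<zeta>) / (2 * pi * \<i>))"

end

theory Submission
  imports Defs
begin

no_notation Finite_Cartesian_Product.vec.vec_nth (infixl \<open>$\<close> 90)
no_notation Formal_Power_Series.fps_nth (infixl \<open>$\<close> 75)

definition Dm :: "nat \<Rightarrow> complex mat" where
  "Dm k = mat k k (\<lambda>(i,j). if i + 1 = k \<and> j = 0 then (-1)^(k-1) else 0)"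

fun MD :: "nat \<Rightarrow> complex mat \<Rightarrow> nat \<Rightarrow> complex mat" where
  "MD k B 0 = 0\<^sub>m k k"
| "MD k B (Suc p) = B * MD k B p + Dm k * B ^\<^sub>m p"

lemma Acomp_carrier[simp]: "Acomp k s \<in> carrier_mat k k" by (simp add: Acomp_def)
lemma Dm_carrier[simp]: "Dm k \<in> carrier_mat k k" by (simp add: Dm_def)
lemma MD_carrier[simp]: "B \<in> carrier_mat k k \<Longrightarrow> MD k B p \<in> carrier_mat k k"
  by (induct p) (auto intro!: add_carrier_mat mult_carrier_mat)

lemma mult_idx: "A \<in> carrier_mat n n \<Longrightarrow> B \<in> carrier_mat n n \<Longrightarrow> i<n \<Longrightarrow> j<n \<Longrightarrow>
  (A*B)$$(i,j) = (\<Sum>l=0..<n. A$$(i,l) * B$$(l,j))"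
  by (auto simp: scalar_prod_def)

lemma pow_mat_Suc': "B \<in> carrier_mat n n \<Longrightarrow> B ^\<^sub>m (Suc p) = B * B ^\<^sub>m p"
proof (induct p)
  case 0 then show ?case by simp
next
  case (Suc p)
  have "B ^\<^sub>m Suc (Suc p) = (B * B ^\<^sub>m p) * B" using Suc by simp
  also have "\<dots> = B * (B ^\<^sub>m p * B)" using Suc by (intro assoc_mult_mat) auto
  finally show ?case by simp
qed

lemma Acomp_upd: "i<k \<Longrightarrow> j<k \<Longrightarrow>
  Acomp k (s(k:=t)) $$ (i,j) = Acomp k (s(k:=0)) $$ (i,j) + t * Dm k $$ (i,j)"
  by (auto simp: Acomp_def Dm_def)

lemma dimsA[simp]: "dim_row (Acomp k s) = k" "dim_col (Acomp k s) = k"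
  "dim_row (Dm k) = k" "dim_col (Dm k) = k"
  by (auto simp: Acomp_def Dm_def)

lemma deriv_pow: "i<k \<Longrightarrow> j<k \<Longrightarrow>
  ((\<lambda>t. (Acomp k (s(k:=t)) ^\<^sub>m p) $$ (i,j)) has_field_derivative
     (MD k (Acomp k (s(k:=x))) p) $$ (i,j)) (at x)"
proof (induct p arbitrary: i j)
  case 0
  have e: "(\<lambda>t. (Acomp k (s(k:=t)) ^\<^sub>m 0) $$ (i,j)) = (\<lambda>t. if i = j then 1 else 0)"
    using 0 by (intro ext) (simp only: pow_mat.simps dimsA index_one_mat)
  have z: "MD k (Acomp k (s(k:=x))) 0 $$ (i,j) = 0"
    using 0 by (simp only: MD.simps index_zero_mat)
  show ?case unfolding e z by (rule DERIV_const)
next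
  case (Suc p)
  have eq: "(\<lambda>t. (Acomp k (s(k:=t)) ^\<^sub>m Suc p) $$ (i,j)) =
     (\<lambda>t. \<Sum>l\<in>{0..<k}. Acomp k (s(k:=t)) $$ (i,l) * (Acomp k (s(k:=t)) ^\<^sub>m p) $$ (l,j))"
  proof (rule ext)
    fix t
    show "(Acomp k (s(k:=t)) ^\<^sub>m Suc p) $$ (i,j) =
       (\<Sum>l\<in>{0..<k}. Acomp k (s(k:=t)) $$ (i,l) * (Acomp k (s(k:=t)) ^\<^sub>m p) $$ (l,j))"
      by (subst pow_mat_Suc'[OF Acomp_carrier])
         (rule mult_idx[OF Acomp_carrier pow_carrier_mat[OF Acomp_carrier] Suc.prems])
  qed
  have dA: "((\<lambda>t. Acomp k (s(k:=t)) $$ (i,l)) has_field_derivative Dm k $$ (i,l)) (at x)" if l: "l<k" for l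
  proof -
    have e: "(\<lambda>t. Acomp k (s(k:=t)) $$ (i,l)) = (\<lambda>t. Acomp k (s(k:=0)) $$ (i,l) + t * Dm k $$ (i,l))"
      by (intro ext) (rule Acomp_upd[OF Suc.prems(1) l])
    have "((\<lambda>t. Acomp k (s(k:=0)) $$ (i,l) + t * Dm k $$ (i,l)) has_field_derivative Dm k $$ (i,l)) (at x)"
      by (auto intro!: derivative_eq_intros)
    then show ?thesis unfolding e .
  qed
  have DD: "((\<lambda>t. \<Sum>l\<in>{0..<k}. Acomp k (s(k:=t)) $$ (i,l) * (Acomp k (s(k:=t)) ^\<^sub>m p) $$ (l,j)) has_field_derivative
     (\<Sum>l\<in>{0..<k}. Dm k $$ (i,l) * (Acomp k (s(k:=x)) ^\<^sub>m p) $$ (l,j) + MD k (Acomp k (s(k:=x))) p $$ (l,j) * Acomp k (s(k:=x)) $$ (i,l))) (at x)"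
  proof (rule DERIV_sum)
    fix l assume "l \<in> {0..<k}"
    then have l: "l < k" by simp
    show "((\<lambda>t. Acomp k (s(k:=t)) $$ (i,l) * (Acomp k (s(k:=t)) ^\<^sub>m p) $$ (l,j)) has_field_derivative
       Dm k $$ (i,l) * (Acomp k (s(k:=x)) ^\<^sub>m p) $$ (l,j) + MD k (Acomp k (s(k:=x))) p $$ (l,j) * Acomp k (s(k:=x)) $$ (i,l)) (at x)"
      by (rule DERIV_mult[OF dA[OF l] Suc.hyps[OF l Suc.prems(2)]])
  qed
  have EE: "(\<Sum>l\<in>{0..<k}. Dm k $$ (i,l) * (Acomp k (s(k:=x)) ^\<^sub>m p) $$ (l,j) + MD k (Acomp k (s(k:=x))) p $$ (l,j) * Acomp k (s(k:=x)) $$ (i,l))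
     = MD k (Acomp k (s(k:=x))) (Suc p) $$ (i,j)"
  proof -
    define B where "B = Acomp k (s(k:=x))"
    have c1: "B \<in> carrier_mat k k" "MD k B p \<in> carrier_mat k k" "B ^\<^sub>m p \<in> carrier_mat k k"
      by (auto simp: B_def)
    have "MD k B (Suc p) $$ (i,j) = (B * MD k B p) $$ (i,j) + (Dm k * B ^\<^sub>m p) $$ (i,j)"
      using Suc.prems c1 by (simp only: MD.simps) (intro index_add_mat(1), auto)
    also have "\<dots> = (\<Sum>l=0..<k. B $$ (i,l) * MD k B p $$ (l,j)) + (\<Sum>l=0..<k. Dm k $$ (i,l) * (B ^\<^sub>m p) $$ (l,j))"
      using Suc.prems c1 by (simp only: mult_idx[OF c1(1) c1(2) Suc.prems] mult_idx[OF Dm_carrier c1(3) Suc.prems])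
    also have "\<dots> = (\<Sum>l=0..<k. Dm k $$ (i,l) * (B ^\<^sub>m p) $$ (l,j) + MD k B p $$ (l,j) * B $$ (i,l))"
      by (simp only: sum.distrib[symmetric] add.commute mult.commute)
    finally show ?thesis unfolding B_def by simp
  qed
  show ?case unfolding eq EE[symmetric] by (rule DD)
qed

lemma dims[simp]: "dim_vec (Evec k z) = k"
  by (auto simp: Acomp_def Dm_def Evec_def)

lemma Evec_carrier[simp]: "Evec k z \<in> carrier_vec k" by (simp add: Evec_def)

lemma row0: "p < k \<Longrightarrow> l < k \<Longrightarrow> (Acomp k s ^\<^sub>m p) $$ (0,l) = (if l = p then 1 else 0)"
proof (induct p arbitrary: l)
  case 0 then show ?case by simp
next
  case (Suc p)
  have "(Acomp k s ^\<^sub>m Suc p) $$ (0,l) = (\<Sum>m=0..<k. (Acomp k s ^\<^sub>m p) $$ (0,m) * Acomp k s $$ (m,l))"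
    using Suc.prems by (simp only: pow_mat.simps) (rule mult_idx, auto)
  also have "\<dots> = (\<Sum>m=0..<k. (if m = p then Acomp k s $$ (p,l) else 0))"
    using Suc by (intro sum.cong) auto
  also have "\<dots> = Acomp k s $$ (p,l)" using Suc.prems by simp
  also have "\<dots> = (if l = Suc p then 1 else 0)" using Suc.prems by (simp add: Acomp_def)
  finally show ?case .
qed

lemma E0: "p < k \<Longrightarrow> (Acomp k s ^\<^sub>m p *\<^sub>v Evec k z) $ 0 = z^p"
proof -
  assume p: "p < k"
  have "(Acomp k s ^\<^sub>m p *\<^sub>v Evec k z) $ 0 = (\<Sum>l=0..<k. (Acomp k s ^\<^sub>m p) $$ (0,l) * z^l)"
    using p by (simp add: scalar_prod_def Evec_def)
  also have "\<dots> = (\<Sum>l=0..<k. if l = p then z^l else 0)"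
    using p by (intro sum.cong) (auto simp: row0)
  also have "\<dots> = z^p" using p by simp
  finally show ?thesis .
qed

lemma Ps_alt: "k \<ge> 1 \<Longrightarrow> Ps k s z = z^k - (\<Sum>l=0..<k. (-1)^(k-1-l) * s (k-l) * z^l)"
proof -
  assume k: "k \<ge> 1"
  have "Ps k s z = (\<Sum>l=0..k. (-1)^(k-l) * sc s (k-l) * z^(k-(k-l)))"
    unfolding Ps_def by (subst sum.atLeastAtMost_rev) simp
  also have "\<dots> = (\<Sum>l=0..<k. (-1)^(k-l) * sc s (k-l) * z^(k-(k-l))) + z^k"
    by (simp add: atLeastLessThanSuc_atLeastAtMost[symmetric] sc_def)
  also have "(\<Sum>l=0..<k. (-1)^(k-l) * sc s (k-l) * z^(k-(k-l))) = (\<Sum>l=0..<k. - ((-1)^(k-1-l) * s (k-l) * z^l))"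
  proof (intro sum.cong refl)
    fix l assume "l \<in> {0..<k}"
    then have l: "l < k" by simp
    then have "k - l = Suc (k-1-l)" by simp
    then have "(-1::complex)^(k-l) = - ((-1)^(k-1-l))" by simp
    then show "(-1)^(k-l) * sc s (k-l) * z^(k-(k-l)) = - ((-1)^(k-1-l) * s (k-l) * z^l)"
      using l by (simp add: sc_def)
  qed
  finally show ?thesis by (simp add: sum_negf)
qed

lemma AE: "k \<ge> 1 \<Longrightarrow> Acomp k s *\<^sub>v Evec k z = z \<cdot>\<^sub>v Evec k z + (- Ps k s z) \<cdot>\<^sub>v unit_vec k (k-1)"
proof (intro eq_vecI)
  assume k: "k \<ge> 1"
  fix i assume "i < dim_vec (z \<cdot>\<^sub>v Evec k z + (- Ps k s z) \<cdot>\<^sub>v unit_vec k (k-1))"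
  then have i: "i < k" by simp
  have L: "(Acomp k s *\<^sub>v Evec k z) $ i = (\<Sum>l=0..<k. Acomp k s $$ (i,l) * z^l)"
    using i by (simp add: scalar_prod_def Evec_def)
  show "(Acomp k s *\<^sub>v Evec k z) $ i = (z \<cdot>\<^sub>v Evec k z + (- Ps k s z) \<cdot>\<^sub>v unit_vec k (k-1)) $ i"
  proof (cases "i + 1 = k")
    case True
    have "(\<Sum>l=0..<k. Acomp k s $$ (i,l) * z^l) = (\<Sum>l=0..<k. (-1)^(k-1-l) * s (k-l) * z^l)"
      using True by (intro sum.cong) (auto simp: Acomp_def)
    then show ?thesis using L True i k by (simp add: Ps_alt Evec_def power_Suc[symmetric])
  next
    case False
    have "(\<Sum>l=0..<k. Acomp k s $$ (i,l) * z^l) = (\<Sum>l=0..<k. if l = i+1 then z^l else 0)"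
      using False i by (intro sum.cong) (auto simp: Acomp_def)
    also have "\<dots> = z^(i+1)" using False i by simp
    finally show ?thesis using L False i by (simp add: Evec_def)
  qed
qed simp

lemma DmV: assumes v: "v \<in> carrier_vec k" and k: "k \<ge> 1"
  shows "Dm k *\<^sub>v v = ((-1)^(k-1) * v$0) \<cdot>\<^sub>v unit_vec k (k-1)"
proof (intro eq_vecI)
  fix i assume "i < dim_vec (((-1)^(k-1) * v$0) \<cdot>\<^sub>v unit_vec k (k-1))"
  then have i: "i < k" by simp
  have "(Dm k *\<^sub>v v) $ i = (\<Sum>l=0..<k. Dm k $$ (i,l) * v$l)"
    using i v by (simp add: scalar_prod_def)
  also have "\<dots> = (\<Sum>l=0..<k. if l = 0 then (if i+1 = k then (-1)^(k-1) * v$0 else 0) else 0)"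
    using i by (intro sum.cong) (auto simp: Dm_def)
  also have "\<dots> = (if i+1 = k then (-1)^(k-1) * v$0 else 0)" using k by simp
  finally show "(Dm k *\<^sub>v v) $ i = (((-1)^(k-1) * v$0) \<cdot>\<^sub>v unit_vec k (k-1)) $ i"
    using i by auto
qed (use v in auto)


lemma cc: "((-1::complex)^(k-1)) * ((-1)^(k-1)) = 1"
  by (simp add: power_add[symmetric])

lemma part1:
  assumes k: "k \<ge> 2"
  shows "p < k \<Longrightarrow> z^p \<cdot>\<^sub>v Evec k z = Acomp k s ^\<^sub>m p *\<^sub>v Evec k z
     + ((-1)^(k-1) * Ps k s z) \<cdot>\<^sub>v (MD k (Acomp k s) p *\<^sub>v Evec k z)"
proof (induct p)
  case 0
  show ?case by (intro eq_vecI) (auto simp: scalar_prod_def)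
next
  case (Suc p)
  define A where "A = Acomp k s"
  define E where "E = Evec k z"
  define c :: complex where "c = (-1)^(k-1)"
  define Q where "Q = Ps k s z"
  define V where "V = A ^\<^sub>m p *\<^sub>v E"
  define W where "W = MD k A p *\<^sub>v E"
  define el :: "complex vec" where "el = unit_vec k (k-1)"
  have cA: "A \<in> carrier_mat k k" and cE: "E \<in> carrier_vec k" and cAp: "A ^\<^sub>m p \<in> carrier_mat k k"
    and cM: "MD k A p \<in> carrier_mat k k" and cel: "el \<in> carrier_vec k"
    by (auto simp: A_def E_def el_def)
  have cV: "V \<in> carrier_vec k" and cW: "W \<in> carrier_vec k" using cAp cM cE by (auto simp: V_def W_def)
  have IH: "z^p \<cdot>\<^sub>v E = V + (c*Q) \<cdot>\<^sub>v W" using Suc by (simp add: A_def E_def c_def Q_def V_def W_def)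
  have h1: "A ^\<^sub>m Suc p *\<^sub>v E = A *\<^sub>v V"
    unfolding V_def by (subst pow_mat_Suc'[OF cA]) (rule assoc_mult_mat_vec[OF cA cAp cE])
  have h2: "MD k A (Suc p) *\<^sub>v E = A *\<^sub>v W + Dm k *\<^sub>v V"
    unfolding V_def W_def MD.simps
    by (simp only: add_mult_distrib_mat_vec[OF mult_carrier_mat[OF cA cM] mult_carrier_mat[OF Dm_carrier cAp] cE]
       assoc_mult_mat_vec[OF cA cM cE] assoc_mult_mat_vec[OF Dm_carrier cAp cE])
  have h3: "Dm k *\<^sub>v V = (c * z^p) \<cdot>\<^sub>v el"
    using DmV[OF cV] k Suc.prems E0[of p k s z] by (simp add: c_def el_def V_def A_def E_def)
  have h4: "V = z^p \<cdot>\<^sub>v E + (-(c*Q)) \<cdot>\<^sub>v W"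
  proof (rule eq_vecI)
    fix i assume "i < dim_vec (z^p \<cdot>\<^sub>v E + (-(c*Q)) \<cdot>\<^sub>v W)"
    then have i: "i < k" using cW by simp
    have "vec_index (z^p \<cdot>\<^sub>v E) i = vec_index (V + (c*Q) \<cdot>\<^sub>v W) i" using IH by simp
    then have H: "z^p * E$i = V$i + c*Q*W$i" using i cV cW cE by simp
    then show "V$i = (z^p \<cdot>\<^sub>v E + (-(c*Q)) \<cdot>\<^sub>v W)$i" using i cV cW cE by simp
  qed (use cV cE cW in simp)
  have h5: "A *\<^sub>v V = z^p \<cdot>\<^sub>v (A *\<^sub>v E) + (-(c*Q)) \<cdot>\<^sub>v (A *\<^sub>v W)"
    unfolding h4 using cA cE cW by (simp add: mult_add_distrib_mat_vec[of _ k k] mult_mat_vec[of _ k k])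
  have h6: "A *\<^sub>v E = z \<cdot>\<^sub>v E + (- Q) \<cdot>\<^sub>v el"
    using AE[of k s z] k by (simp add: A_def E_def Q_def el_def)
  have "z^Suc p \<cdot>\<^sub>v E = A ^\<^sub>m Suc p *\<^sub>v E + (c*Q) \<cdot>\<^sub>v (MD k A (Suc p) *\<^sub>v E)"
    unfolding h1 h2 h3 h5 h6
  proof (rule eq_vecI)
    fix i assume "i < dim_vec (z^p \<cdot>\<^sub>v (z \<cdot>\<^sub>v E + (- Q) \<cdot>\<^sub>v el) + (-(c*Q)) \<cdot>\<^sub>v (A *\<^sub>v W)
       + (c*Q) \<cdot>\<^sub>v (A *\<^sub>v W + (c * z^p) \<cdot>\<^sub>v el))"
    then have i: "i < k" using cel by simp
    have "c * c = 1" unfolding c_def by (rule cc)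
    then show "(z^Suc p \<cdot>\<^sub>v E) $ i = (z^p \<cdot>\<^sub>v (z \<cdot>\<^sub>v E + (- Q) \<cdot>\<^sub>v el) + (-(c*Q)) \<cdot>\<^sub>v (A *\<^sub>v W)
       + (c*Q) \<cdot>\<^sub>v (A *\<^sub>v W + (c * z^p) \<cdot>\<^sub>v el)) $ i"
      using i cA cE cel cW by (simp add: algebra_simps) algebra
  qed (use cA cE cel in simp)
  then show ?case by (simp add: A_def E_def c_def Q_def)
qed


definition cf :: "nat \<Rightarrow> (nat \<Rightarrow> complex) \<Rightarrow> nat \<Rightarrow> complex" where
  "cf k s h = (-1)^h * of_nat (k-h) * sc s h"

definition FL :: "nat \<Rightarrow> (nat \<Rightarrow> complex) \<Rightarrow> nat list \<Rightarrow> complex \<Rightarrow> complex mat" where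
  "FL k s xs t = foldr (\<lambda>h M. cf k s h \<cdot>\<^sub>m (Acomp k (s(k:=t)) ^\<^sub>m (k-h-1)) + M) xs (0\<^sub>m k k)"

definition GL :: "nat \<Rightarrow> (nat \<Rightarrow> complex) \<Rightarrow> nat list \<Rightarrow> complex mat" where
  "GL k s xs = foldr (\<lambda>h M. cf k s h \<cdot>\<^sub>m MD k (Acomp k s) (k-h-1) + M) xs (0\<^sub>m k k)"

lemma FL_Cons: "FL k s (h#xs) t = cf k s h \<cdot>\<^sub>m (Acomp k (s(k:=t)) ^\<^sub>m (k-h-1)) + FL k s xs t"
  by (simp add: FL_def)
lemma GL_Cons: "GL k s (h#xs) = cf k s h \<cdot>\<^sub>m MD k (Acomp k s) (k-h-1) + GL k s xs"
  by (simp add: GL_def)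

lemma FL_carrier[simp]: "FL k s xs t \<in> carrier_mat k k"
  by (induct xs) (auto simp: FL_def)
lemma GL_carrier[simp]: "GL k s xs \<in> carrier_mat k k"
  by (induct xs) (auto simp: GL_def)

lemma dims2[simp]: "dim_row (FL k s xs t) = k" "dim_col (FL k s xs t) = k"
  "dim_row (GL k s xs) = k" "dim_col (GL k s xs) = k"
  "dim_row (MD k (Acomp k s) p) = k" "dim_col (MD k (Acomp k s) p) = k"
  using FL_carrier[of k s xs t] GL_carrier[of k s xs] MD_carrier[OF Acomp_carrier[of k s], of p]
  by (auto simp del: FL_carrier GL_carrier MD_carrier)

lemma dPsA_FL: "dPsA k (s(k:=t)) = FL k s [0..<k] t"
  unfolding dPsA_def FL_def
  by (intro foldr_cong) (auto simp: cf_def sc_def)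

lemma FL_deriv: "i<k \<Longrightarrow> j<k \<Longrightarrow>
  ((\<lambda>t. FL k s xs t $$ (i,j)) has_field_derivative GL k s xs $$ (i,j)) (at (s k))"
proof (induct xs)
  case Nil
  then show ?case by (simp add: FL_def GL_def)
next
  case (Cons h xs)
  have e1: "\<And>t. FL k s (h#xs) t $$ (i,j) = cf k s h * (Acomp k (s(k:=t)) ^\<^sub>m (k-h-1)) $$ (i,j) + FL k s xs t $$ (i,j)"
    using Cons.prems by (simp add: FL_Cons)
  have e2: "GL k s (h#xs) $$ (i,j) = cf k s h * MD k (Acomp k s) (k-h-1) $$ (i,j) + GL k s xs $$ (i,j)"
    using Cons.prems by (simp add: GL_Cons)
  have d: "((\<lambda>t. (Acomp k (s(k:=t)) ^\<^sub>m (k-h-1)) $$ (i,j)) has_field_derivative MD k (Acomp k s) (k-h-1) $$ (i,j)) (at (s k))"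
    using deriv_pow[OF Cons.prems, of s "k-h-1" "s k"] by simp
  have dd: "((\<lambda>t. cf k s h * (Acomp k (s(k:=t)) ^\<^sub>m (k-h-1)) $$ (i,j) + FL k s xs t $$ (i,j))
     has_field_derivative cf k s h * MD k (Acomp k s) (k-h-1) $$ (i,j) + GL k s xs $$ (i,j)) (at (s k))"
    by (rule DERIV_add[OF DERIV_cmult[OF d] Cons.hyps[OF Cons.prems]])
  then show ?case unfolding e1 e2 .
qed

lemma comb_idx: assumes "X \<in> carrier_mat k k" "Y \<in> carrier_mat k k" "v \<in> carrier_vec k" "i < k"
  shows "((a \<cdot>\<^sub>m X + Y) *\<^sub>v v) $ i = a * (X *\<^sub>v v) $ i + (Y *\<^sub>v v) $ i"
  using assms by (simp add: scalar_prod_def sum_distrib_left mult.assoc sum.distrib distrib_right)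

lemma Evec_idx: "i < k \<Longrightarrow> Evec k z $ i = z^i" by (simp add: Evec_def)

lemma alg_aux: fixes u w S a b d e q c :: complex
  assumes "u*w = a + q*b" "S*w = d + q*e" shows "(c*u + S)*w = c*a + d + q*(c*b+e)"
proof -
  have "(c*u + S)*w = c*(u*w) + S*w" by (simp add: algebra_simps)
  also have "\<dots> = c*(a + q*b) + (d + q*e)" using assms by simp
  also have "\<dots> = c*a + d + q*(c*b+e)" by (simp add: algebra_simps)
  finally show ?thesis .
qed

lemma FL_id:
  assumes k: "k \<ge> 2"
  shows "set xs \<subseteq> {..<k} \<Longrightarrow> (\<Sum>h\<leftarrow>xs. cf k s h * z^(k-h-1)) \<cdot>\<^sub>v Evec k z
     = FL k s xs (s k) *\<^sub>v Evec k z + ((-1)^(k-1) * Ps k s z) \<cdot>\<^sub>v (GL k s xs *\<^sub>v Evec k z)"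
proof (induct xs)
  case Nil
  show ?case by (intro eq_vecI) (auto simp: scalar_prod_def FL_def GL_def)
next
  case (Cons h xs)
  define m where "m = k-h-1"
  have m: "m < k" using k by (simp add: m_def)
  note P1 = part1[OF k m, of z s]
  note IH = Cons.hyps[OF subset_trans[OF _ Cons.prems]]
  have IH': "(\<Sum>h\<leftarrow>xs. cf k s h * z^(k-h-1)) \<cdot>\<^sub>v Evec k z
     = FL k s xs (s k) *\<^sub>v Evec k z + ((-1)^(k-1) * Ps k s z) \<cdot>\<^sub>v (GL k s xs *\<^sub>v Evec k z)"
    using IH by auto
  show ?case
  proof (rule eq_vecI)
    fix i assume "i < dim_vec (FL k s (h # xs) (s k) *\<^sub>v Evec k z +
         ((-1)^(k-1) * Ps k s z) \<cdot>\<^sub>v (GL k s (h # xs) *\<^sub>v Evec k z))"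
    then have i: "i < k" by simp
    have H1: "z^m * z^i = (Acomp k s ^\<^sub>m m *\<^sub>v Evec k z) $ i
       + ((-1)^(k-1) * Ps k s z) * (MD k (Acomp k s) m *\<^sub>v Evec k z) $ i"
      using arg_cong[OF P1, of "\<lambda>v. vec_index v i"] i
      by (simp only: index_add_vec index_smult_vec dim_mult_mat_vec pow_mat_dim dims dimsA dims2 Evec_idx if_True if_False
         split: if_splits)
    have H2: "(\<Sum>h\<leftarrow>xs. cf k s h * z^(k-h-1)) * z^i = (FL k s xs (s k) *\<^sub>v Evec k z) $ i
       + ((-1)^(k-1) * Ps k s z) * (GL k s xs *\<^sub>v Evec k z) $ i"
      using arg_cong[OF IH', of "\<lambda>v. vec_index v i"] i
      by (simp only: index_add_vec index_smult_vec dim_mult_mat_vec dims dimsA dims2 Evec_idx)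
    have F: "FL k s (h # xs) (s k) = cf k s h \<cdot>\<^sub>m (Acomp k s ^\<^sub>m m) + FL k s xs (s k)"
      by (simp add: FL_Cons m_def)
    have L: "((\<Sum>h\<leftarrow>h # xs. cf k s h * z^(k-h-1)) \<cdot>\<^sub>v Evec k z) $ i
       = (cf k s h * z^m + (\<Sum>h\<leftarrow>xs. cf k s h * z^(k-h-1))) * z^i"
      using i by (simp add: Evec_def m_def)
    have R: "(FL k s (h # xs) (s k) *\<^sub>v Evec k z + ((-1)^(k-1) * Ps k s z) \<cdot>\<^sub>v (GL k s (h # xs) *\<^sub>v Evec k z)) $ i
       = (cf k s h * (Acomp k s ^\<^sub>m m *\<^sub>v Evec k z) $ i + (FL k s xs (s k) *\<^sub>v Evec k z) $ i)
         + ((-1)^(k-1) * Ps k s z) * (cf k s h * (MD k (Acomp k s) m *\<^sub>v Evec k z) $ i + (GL k s xs *\<^sub>v Evec k z) $ i)"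
      unfolding F GL_Cons m_def[symmetric]
      using i
      by (simp only: index_add_vec index_smult_vec dim_mult_mat_vec dims dimsA dims2 index_add_mat
         comb_idx[OF pow_carrier_mat[OF Acomp_carrier] FL_carrier Evec_carrier i]
         comb_idx[OF MD_carrier[OF Acomp_carrier] GL_carrier Evec_carrier i])
    show "((\<Sum>h\<leftarrow>h # xs. cf k s h * z^(k-h-1)) \<cdot>\<^sub>v Evec k z) $ i =
         (FL k s (h # xs) (s k) *\<^sub>v Evec k z + ((-1)^(k-1) * Ps k s z) \<cdot>\<^sub>v (GL k s (h # xs) *\<^sub>v Evec k z)) $ i"
      unfolding L R by (rule alg_aux[OF H1 H2])
  qed simp
qed

lemma dPs_sum: "k \<ge> 1 \<Longrightarrow> dPs k s z = (\<Sum>h\<leftarrow>[0..<k]. cf k s h * z^(k-h-1))"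
  unfolding dPs_def interv_sum_list_conv_sum_set_nat cf_def
  by (intro sum.cong) (auto simp: mult.assoc)

lemma part3:
  assumes k: "k \<ge> 2"
  shows "dPs k s z \<cdot>\<^sub>v Evec k z = dPsA k s *\<^sub>v Evec k z
     + ((-1)^(k-1) * Ps k s z) \<cdot>\<^sub>v (dsk_mat k (dPsA k) s *\<^sub>v Evec k z)"
proof -
  have A: "dPsA k s = FL k s [0..<k] (s k)" using dPsA_FL[of k s "s k"] by simp
  have B: "dsk_mat k (dPsA k) s = GL k s [0..<k]"
  proof (rule eq_matI)
    fix i j assume "i < dim_row (GL k s [0..<k])" "j < dim_col (GL k s [0..<k])"
    then have ij: "i < k" "j < k" by auto
    show "dsk_mat k (dPsA k) s $$ (i,j) = GL k s [0..<k] $$ (i,j)"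
      using ij DERIV_imp_deriv[OF FL_deriv[OF ij, of s "[0..<k]"]]
      by (simp add: dsk_mat_def dPsA_FL)
  qed (auto simp: dsk_mat_def)
  have D: "dPs k s z = (\<Sum>h\<leftarrow>[0..<k]. cf k s h * z^(k-h-1))" using k by (intro dPs_sum) auto
  have F: "set [0..<k] \<subseteq> {..<k}" by auto
  show ?thesis unfolding A B D by (rule FL_id[OF k F])
qed

lemma dsk_pow: "dsk_mat k (\<lambda>s'. Acomp k s' ^\<^sub>m p) s = MD k (Acomp k s) p"
proof (rule eq_matI)
  fix i j assume "i < dim_row (MD k (Acomp k s) p)" "j < dim_col (MD k (Acomp k s) p)"
  then have ij: "i < k" "j < k" by auto
  show "dsk_mat k (\<lambda>s'. Acomp k s' ^\<^sub>m p) s $$ (i,j) = MD k (Acomp k s) p $$ (i,j)"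
    using ij DERIV_imp_deriv[OF deriv_pow[OF ij, of s p "s k"]]
    by (simp add: dsk_mat_def)
qed (auto simp: dsk_mat_def)

lemma eqmod_eq: assumes "\<And>s z. U s z = V s z" "\<And>s z. U s z \<in> carrier_vec k"
  shows "eq_mod_P2 k U V"
  unfolding eq_mod_P2_def
proof (intro exI[of _ "\<lambda>s z i. 0"] conjI allI impI)
  show "polyfun k (\<lambda>s z. 0)" by (rule pf_const)
  fix s z
  show "U s z - V s z = (Ps k s z)\<^sup>2 \<cdot>\<^sub>v vec k (\<lambda>i. 0)"
    using assms[of s z] by (intro eq_vecI) auto
qed


lemma Ps_cont: "continuous_on S (Ps k s)"
  unfolding Ps_def by (intro continuous_intros)

lemma part2:
  assumes k: "k \<ge> 2" and holo: "f holomorphic_on UNIV"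
    and roots: "\<forall>\<zeta>. Ps k s \<zeta> = 0 \<longrightarrow> norm \<zeta> < R"
  shows "Phi k (\<lambda>z. z * f z) s R = Acomp k s *\<^sub>v Phi k f s R"
proof -
  define g where "g = circlepath 0 R"
  have nz: "Ps k s \<zeta> \<noteq> 0" if "\<zeta> \<in> path_image g" for \<zeta>
    using that roots by (auto simp: g_def)
  have contf: "continuous_on S f" for S
    using holomorphic_on_imp_continuous_on[OF holo] continuous_on_subset by blast
  have int: "(\<lambda>\<zeta>. f \<zeta> * \<zeta>^n / Ps k s \<zeta>) contour_integrable_on g" for n
    unfolding g_def
    by (rule contour_integrable_continuous_circlepath)
       (intro continuous_intros contf Ps_cont, use nz in \<open>auto simp: g_def\<close>)
  have intf: "f contour_integrable_on g"
    unfolding g_def by (rule contour_integrable_continuous_circlepath) (rule contf)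
  have zero: "contour_integral g f = 0"
    unfolding g_def
    by (rule contour_integral_unique, rule Cauchy_theorem_convex_simple[OF holo]) auto
  let ?I = "\<lambda>n. contour_integral g (\<lambda>\<zeta>. f \<zeta> * \<zeta>^n / Ps k s \<zeta>)"
  have PhiI: "Phi k f s R $ n = ?I n / (2 * pi * \<i>)" if "n < k" for n
    using that by (simp add: Phi_def g_def)
  have PhiZ: "Phi k (\<lambda>z. z * f z) s R $ n = ?I (Suc n) / (2 * pi * \<i>)" if "n < k" for n
  proof -
    have "(\<lambda>\<zeta>. \<zeta> * f \<zeta> * \<zeta>^n / Ps k s \<zeta>) = (\<lambda>\<zeta>. f \<zeta> * \<zeta>^Suc n / Ps k s \<zeta>)"
      by (auto simp: algebra_simps)
    then show ?thesis using that by (simp add: Phi_def g_def)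
  qed
  show ?thesis
  proof (rule eq_vecI)
    fix i assume "i < dim_vec (Acomp k s *\<^sub>v Phi k f s R)"
    then have i: "i < k" by simp
    have L: "(Acomp k s *\<^sub>v Phi k f s R) $ i = (\<Sum>l=0..<k. Acomp k s $$ (i,l) * (?I l / (2 * pi * \<i>)))"
      using i by (simp add: scalar_prod_def Phi_def g_def)
    show "Phi k (\<lambda>z. z * f z) s R $ i = (Acomp k s *\<^sub>v Phi k f s R) $ i"
    proof (cases "i + 1 = k")
      case False
      have "(\<Sum>l=0..<k. Acomp k s $$ (i,l) * (?I l / (2 * pi * \<i>)))
          = (\<Sum>l=0..<k. if l = i+1 then ?I l / (2 * pi * \<i>) else 0)"
        using False i by (intro sum.cong) (auto simp: Acomp_def)
      also have "\<dots> = ?I (Suc i) / (2 * pi * \<i>)" using False i by simp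
      finally show ?thesis using L PhiZ i by simp
    next
      case True
      have "(\<Sum>l=0..<k. Acomp k s $$ (i,l) * (?I l / (2 * pi * \<i>)))
          = (\<Sum>l=0..<k. contour_integral g (\<lambda>\<zeta>. (-1)^(k-1-l) * s (k-l) * (f \<zeta> * \<zeta>^l / Ps k s \<zeta>))) / (2 * pi * \<i>)"
        unfolding sum_divide_distrib
        using True by (intro sum.cong refl, subst contour_integral_lmul[OF int]) (simp add: Acomp_def)
      also have "(\<Sum>l=0..<k. contour_integral g (\<lambda>\<zeta>. (-1)^(k-1-l) * s (k-l) * (f \<zeta> * \<zeta>^l / Ps k s \<zeta>)))
          = contour_integral g (\<lambda>\<zeta>. \<Sum>l=0..<k. (-1)^(k-1-l) * s (k-l) * (f \<zeta> * \<zeta>^l / Ps k s \<zeta>))"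
        by (rule contour_integral_sum[symmetric], simp, rule contour_integrable_lmul, rule int)
      also have "\<dots> = contour_integral g (\<lambda>\<zeta>. f \<zeta> * \<zeta>^k / Ps k s \<zeta> - f \<zeta>)"
      proof (rule contour_integral_eq)
        fix \<zeta> assume z: "\<zeta> \<in> path_image g"
        have "(\<Sum>l=0..<k. (-1)^(k-1-l) * s (k-l) * (f \<zeta> * \<zeta>^l / Ps k s \<zeta>))
            = (\<Sum>l=0..<k. ((-1)^(k-1-l) * s (k-l) * \<zeta>^l) * (f \<zeta> / Ps k s \<zeta>))"
          by (intro sum.cong refl) (simp add: mult_ac)
        also have "\<dots> = (\<Sum>l=0..<k. (-1)^(k-1-l) * s (k-l) * \<zeta>^l) * (f \<zeta> / Ps k s \<zeta>)"
          by (rule sum_distrib_right[symmetric])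
        also have "\<dots> = (\<zeta>^k - Ps k s \<zeta>) * (f \<zeta> / Ps k s \<zeta>)"
          using Ps_alt[of k s \<zeta>] k by simp
        also have "\<dots> = f \<zeta> * \<zeta>^k / Ps k s \<zeta> - f \<zeta>"
          using nz[OF z] by (simp add: field_simps)
        finally show "(\<Sum>l=0..<k. (-1)^(k-1-l) * s (k-l) * (f \<zeta> * \<zeta>^l / Ps k s \<zeta>))
            = f \<zeta> * \<zeta>^k / Ps k s \<zeta> - f \<zeta>" .
      qed
      also have "\<dots> = ?I k"
        using contour_integral_diff[OF int intf] zero by simp
      finally have C: "(\<Sum>l=0..<k. Acomp k s $$ (i,l) * (?I l / (2 * pi * \<i>))) = ?I k / (2 * pi * \<i>)" .
      have Sk: "Suc i = k" using True by simp
      have Z: "Phi k (\<lambda>z. z * f z) s R $ i = ?I k / (2 * pi * \<i>)" using PhiZ[OF i] by (simp only: Sk)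
      show ?thesis by (simp only: Z L C)
    qed
  qed (simp add: Phi_def)
qed

theorem mainTheorem5:
  fixes k :: nat
  assumes "k \<ge> 2"
  shows "(\<forall>p<k. eq_mod_P2 k
            (\<lambda>s z. z^p \<cdot>\<^sub>v Evec k z)
            (\<lambda>s z. (Acomp k s ^\<^sub>m p) *\<^sub>v Evec k z
                 + ((-1)^(k-1) * Ps k s z) \<cdot>\<^sub>v
                     (dsk_mat k (\<lambda>s'. Acomp k s' ^\<^sub>m p) s *\<^sub>v Evec k z)))
       \<and> (\<forall>(f :: complex \<Rightarrow> complex) s (R :: real).
            f holomorphic_on UNIV \<longrightarrow> (\<forall>\<zeta>. Ps k s \<zeta> = 0 \<longrightarrow> norm \<zeta> < R) \<longrightarrow>
            Phi k (\<lambda>z. z * f z) s R = Acomp k s *\<^sub>v Phi k f s R)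
       \<and> eq_mod_P2 k
            (\<lambda>s z. dPs k s z \<cdot>\<^sub>v Evec k z)
            (\<lambda>s z. dPsA k s *\<^sub>v Evec k z
                 + ((-1)^(k-1) * Ps k s z) \<cdot>\<^sub>v
                     (dsk_mat k (dPsA k) s *\<^sub>v Evec k z))"
  proof (intro conjI allI impI)
  fix p assume p: "p < k"
  show "eq_mod_P2 k
            (\<lambda>s z. z^p \<cdot>\<^sub>v Evec k z)
            (\<lambda>s z. (Acomp k s ^\<^sub>m p) *\<^sub>v Evec k z
                 + ((-1)^(k-1) * Ps k s z) \<cdot>\<^sub>v
                     (dsk_mat k (\<lambda>s'. Acomp k s' ^\<^sub>m p) s *\<^sub>v Evec k z))"
    by (rule eqmod_eq) (unfold dsk_pow, rule part1[OF assms p], simp)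
next
  fix f :: "complex \<Rightarrow> complex" and s and R :: real
  assume "f holomorphic_on UNIV" "\<forall>\<zeta>. Ps k s \<zeta> = 0 \<longrightarrow> norm \<zeta> < R"
  then show "Phi k (\<lambda>z. z * f z) s R = Acomp k s *\<^sub>v Phi k f s R"
    by (rule part2[OF assms])
next
  show "eq_mod_P2 k
            (\<lambda>s z. dPs k s z \<cdot>\<^sub>v Evec k z)
            (\<lambda>s z. dPsA k s *\<^sub>v Evec k z
                 + ((-1)^(k-1) * Ps k s z) \<cdot>\<^sub>v
                     (dsk_mat k (dPsA k) s *\<^sub>v Evec k z))"
    by (rule eqmod_eq) (rule part3[OF assms], simp)
qed

end
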